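(* Let $s,d,t$ be positive integers, $\mathbb{F}$ a field, $\mathcal{C}\subseteq\mathbb{F}^n$ a linear code of rate $(s-dt)/s$, and $\mathcal{L}:[n]\to[s]$ a labeling with $\Delta_{\mathcal{L}}(\mathcal{C})\ge dt+1$. Then $|\mathcal{L}^{-1}(\lambda)|=|\mathcal{L}^{-1}(\lambda')|$ for all $\lambda,\lambda'\in[s]$.
   Context: A labeling is a surjection $\mathcal{L}:[n]\to[s]$, and $\mathcal{L}^{-1}(\lambda)=\{i\in[n]:\mathcal{L}(i)=\lambda\}$. Labelweight: for $\mathbf{c}\in\mathbb{F}^n$, $\Delta_{\mathcal{L}}(\mathbf{c})=|\{\mathcal{L}(i): c_i\neq0\}|$; for a code $\mathcal{C}$, $\Delta_{\mathcal{L}}(\mathcal{C})=\min_{\mathbf{0}\ne\mathbf{c}\in\mathcal{C}}\Delta_{\mathcal{L}}(\mathbf{c})$. Rate of a linear code of dimension $k$ in $\mathbb{F}^n$ is $k/n$. *)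

theory Defs
  imports "HOL-Analysis.Analysis" "HOL-Library.Extended_Nat"
begin

text \<open>Coordinates are indexed by a finite type 'n (so n = CARD('n)); labels are 1..s.\<close>

definition labelweight_vec :: "('n::finite \<Rightarrow> nat) \<Rightarrow> 'a::zero ^ 'n \<Rightarrow> nat" where
  "labelweight_vec L c = card {L i | i. c $ i \<noteq> 0}"

definition labelweight_code :: "('n::finite \<Rightarrow> nat) \<Rightarrow> ('a::zero ^ 'n) set \<Rightarrow> enat" where
  "labelweight_code L C = (INF c \<in> C - {0}. enat (labelweight_vec L c))"

end

theory Submission
  imports Defs
begin

lemma comb_part:
  fixes a :: "nat \<Rightarrow> nat" and U :: "nat set"
  assumes fin: "finite U" and m0: "0 < m" and ms: "m < card U"
    and bnd: "\<And>A. A \<subseteq> U \<Longrightarrow> card A = m \<Longrightarrow> sum a A \<le> q"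
    and tot: "sum a U * m = q * card U"
    and l: "l \<in> U" and u: "u \<in> U"
  shows "a l = a u"
proof -
  define s where "s = card U"
  define S where "S = {A. A \<subseteq> U \<and> card A = m}"
  have finS: "finite S" unfolding S_def using fin by auto
  have cardS: "card S = s choose m" unfolding S_def s_def using n_subsets[OF fin] by simp
  define c where "c = (s - 1) choose (m - 1)"
  have cnt: "card {A\<in>S. x \<in> A} = c" if x: "x \<in> U" for x
  proof -
    have "bij_betw (insert x) {B. B \<subseteq> U - {x} \<and> card B = m - 1} {A\<in>S. x \<in> A}"
    proof (rule bij_betw_byWitness[where f' = "\<lambda>A. A - {x}"])
      show "\<forall>B\<in>{B. B \<subseteq> U - {x} \<and> card B = m - 1}. insert x B - {x} = B" by auto
      show "\<forall>A\<in>{A \<in> S. x \<in> A}. insert x (A - {x}) = A" by auto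
      show "insert x ` {B. B \<subseteq> U - {x} \<and> card B = m - 1} \<subseteq> {A \<in> S. x \<in> A}"
      proof
        fix A assume "A \<in> insert x ` {B. B \<subseteq> U - {x} \<and> card B = m - 1}"
        then obtain B where B: "B \<subseteq> U - {x}" "card B = m - 1" "A = insert x B" by auto
        have "finite B" using B(1) fin finite_subset by blast
        then have "card A = m" using B m0 by (auto simp: card_insert_if)
        then show "A \<in> {A \<in> S. x \<in> A}" using B x unfolding S_def by auto
      qed
      show "(\<lambda>A. A - {x}) ` {A \<in> S. x \<in> A} \<subseteq> {B. B \<subseteq> U - {x} \<and> card B = m - 1}"
      proof
        fix B assume "B \<in> (\<lambda>A. A - {x}) ` {A \<in> S. x \<in> A}"
        then obtain A where A: "A \<subseteq> U" "card A = m" "x \<in> A" "B = A - {x}" unfolding S_def by auto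
        have "finite A" using A(1) fin finite_subset by blast
        then show "B \<in> {B. B \<subseteq> U - {x} \<and> card B = m - 1}" using A by auto
      qed
    qed
    then have "card {A\<in>S. x \<in> A} = card {B. B \<subseteq> U - {x} \<and> card B = m - 1}"
      by (simp add: bij_betw_same_card)
    also have "\<dots> = card (U - {x}) choose (m - 1)" using n_subsets[of "U - {x}"] fin by simp
    also have "\<dots> = c" using x fin unfolding c_def s_def by simp
    finally show ?thesis .
  qed
  have "(\<Sum>A\<in>S. sum a A) = (\<Sum>A\<in>S. \<Sum>x\<in>U. if x \<in> A then a x else 0)"
  proof (rule sum.cong[OF refl])
    fix A assume "A \<in> S"
    then have "A \<subseteq> U" unfolding S_def by auto
    then have "U \<inter> A = A" by auto
    then show "sum a A = (\<Sum>x\<in>U. if x \<in> A then a x else 0)"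
      using fin by (simp add: sum.If_cases)
  qed
  also have "\<dots> = (\<Sum>x\<in>U. \<Sum>A\<in>S. if x \<in> A then a x else 0)" by (rule sum.swap)
  also have "\<dots> = (\<Sum>x\<in>U. a x * card {A\<in>S. x \<in> A})"
  proof (rule sum.cong[OF refl])
    fix x
    have "(\<Sum>A\<in>S. if x \<in> A then a x else 0) = (\<Sum>A\<in>{A\<in>S. x \<in> A}. a x)"
      using finS by (simp add: sum.If_cases Int_def conj_commute)
    then show "(\<Sum>A\<in>S. if x \<in> A then a x else 0) = a x * card {A\<in>S. x \<in> A}" by simp
  qed
  also have "\<dots> = (\<Sum>x\<in>U. a x * c)" using cnt by simp
  also have "\<dots> = sum a U * c" by (simp add: sum_distrib_right)
  finally have sumS: "(\<Sum>A\<in>S. sum a A) = sum a U * c" .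
  have bin: "m * (s choose m) = s * c" unfolding c_def using times_binomial_minus1_eq[OF m0] .
  have "m * (s * (card S * q)) = m * (s * (sum a U * c))"
  proof -
    have "m * (s * (card S * q)) = s * (m * (s choose m)) * q" using cardS by (simp add: algebra_simps)
    also have "\<dots> = s * (s * c) * q" using bin by simp
    also have "\<dots> = s * c * (q * s)" by (simp add: algebra_simps)
    also have "\<dots> = s * c * (sum a U * m)" using tot s_def by simp
    also have "\<dots> = m * (s * (sum a U * c))" by (simp add: algebra_simps)
    finally show ?thesis .
  qed
  then have "card S * q = sum a U * c" using m0 ms s_def by simp
  then have eqs: "(\<Sum>A\<in>S. sum a A) = (\<Sum>A\<in>S. q)" using sumS by simp
  have allq: "sum a A = q" if "A \<in> S" for A
  proof (rule ccontr)
    assume "sum a A \<noteq> q"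
    have le: "\<forall>B\<in>S. sum a B \<le> q" using bnd unfolding S_def by blast
    then have "sum a A < q" using \<open>sum a A \<noteq> q\<close> that by (simp add: order_less_le)
    then have "(\<Sum>A\<in>S. sum a A) < (\<Sum>A\<in>S. q)"
      using sum_strict_mono_ex1[OF finS le] that by blast
    then show False using eqs by simp
  qed
  show ?thesis
  proof (cases "l = u")
    case True then show ?thesis by simp
  next
    case False
    have "m - 1 \<le> card (U - {l, u})" using ms l u False fin by (simp add: card_Diff_subset)
    then obtain B where B: "B \<subseteq> U - {l, u}" "card B = m - 1" "finite B"
      by (meson obtain_subset_with_card_n)
    have nl: "l \<notin> B" "u \<notin> B" using B(1) by auto
    have "insert l B \<in> S" "insert u B \<in> S" using B l u m0 nl unfolding S_def by auto
    then have "sum a (insert l B) = sum a (insert u B)" using allq by simp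
    then show ?thesis using B nl by simp
  qed
qed

lemma dim_bound:
  fixes C :: "('a::field ^ 'n::finite) set" and P :: "'n set"
  assumes sub: "vec.subspace C" and z: "\<And>x. x \<in> C \<Longrightarrow> (\<forall>j. j \<notin> P \<longrightarrow> x$j = 0) \<Longrightarrow> x = 0"
  shows "vec.dim C + card P \<le> CARD('n)"
proof -
  define Q where "Q = (\<lambda>i. axis i (1::'a)) ` P"
  have indQ: "vec.independent Q"
    by (rule vec.independent_mono[OF independent_cart_basis]) (auto simp: Q_def cart_basis_def)
  have cardQ: "card Q = card P" unfolding Q_def
    by (rule card_image) (auto simp: inj_on_def axis_eq_axis)
  have dimW: "vec.dim (vec.span Q) = card P" using vec.dim_span_eq_card_independent[OF indQ] cardQ by simp
  have subT: "vec.subspace {x::'a^'n. \<forall>j. j \<notin> P \<longrightarrow> x$j = 0}"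
    by (auto simp: vec.subspace_def)
  have "vec.span Q \<subseteq> {x. \<forall>j. j \<notin> P \<longrightarrow> x$j = 0}"
    by (rule vec.span_minimal[OF _ subT]) (auto simp: Q_def axis_def)
  then have int: "C \<inter> vec.span Q \<subseteq> {0}" using z by blast
  define SS where "SS = {x + y |x y. x \<in> C \<and> y \<in> vec.span Q}"
  have e1: "vec.dim SS + vec.dim (C \<inter> vec.span Q) = vec.dim C + vec.dim (vec.span Q)"
    unfolding SS_def by (rule vec.dim_sums_Int[OF sub vec.subspace_span])
  have e2: "vec.dim (C \<inter> vec.span Q) = 0" using int vec.dim_eq_0 by blast
  have e3: "vec.dim (UNIV::('a^'n) set) = CARD('n)" using vec.dim_UNIV card_cart_basis by metis
  have e4: "vec.dim SS \<le> CARD('n)" using vec.dim_subset[of SS UNIV] e3 by simp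
  from e1 e2 e4 dimW show ?thesis by linarith
qed

lemma card_vimage_sum:
  fixes L :: "'n::finite \<Rightarrow> nat"
  assumes "finite A"
  shows "card (L -` A) = (\<Sum>l\<in>A. card (L -` {l}))"
  using assms
proof (induction A rule: finite_induct)
  case empty then show ?case by simp
next
  case (insert x F)
  have "L -` insert x F = L -` {x} \<union> L -` F" by auto
  moreover have "L -` {x} \<inter> L -` F = {}" using insert by auto
  ultimately have "card (L -` insert x F) = card (L -` {x}) + card (L -` F)"
    by (simp add: card_Un_disjoint)
  then show ?case using insert by simp
qed

theorem mainTheorem3:
  fixes s d t :: nat
    and C :: "('a::field ^ 'n::finite) set"
    and L :: "'n \<Rightarrow> nat"
  assumes "s > 0" and "d > 0" and "t > 0"
    and "vec.subspace C"
    and "C \<noteq> {0}"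
    and "real (vec.dim C) / real CARD('n) = (real s - real d * real t) / real s"
    and "L ` UNIV = {1..s}"
    and "labelweight_code L C \<ge> enat (d * t + 1)"
  shows "\<forall>\<kappa>\<in>{1..s}. \<forall>\<mu>\<in>{1..s}. card (L -` {\<kappa>}) = card (L -` {\<mu>})"
proof -
  define n where "n = CARD('n)"
  define k where "k = vec.dim C"
  define m where "m = d * t"
  have n0: "n > 0" unfolding n_def by simp
  have m0: "m > 0" unfolding m_def using assms by simp
  have "0 \<in> C" using assms(4) vec.subspace_0 by blast
  have k0: "k > 0"
  proof (rule ccontr)
    assume "\<not> k > 0"
    then have "vec.dim C = 0" by (simp add: k_def)
    then have "C \<subseteq> {0}" by simp
    with \<open>0 \<in> C\<close> assms(5) show False by blast
  qed
  have r: "real k * real s = real n * (real s - real m)"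
    using assms(6) n0 assms(1) unfolding k_def n_def m_def by (simp add: field_simps)
  have "real m < real s"
  proof (rule ccontr)
    assume "\<not> real m < real s"
    then have "real n * (real s - real m) \<le> 0" using n0 by (simp add: mult_nonneg_nonpos)
    moreover have "real k * real s > 0" using k0 assms(1) by simp
    ultimately show False using r by simp
  qed
  then have ms: "m < s" by simp
  have "real (k * s + n * m) = real (n * s)" using r by (simp add: algebra_simps)
  then have ks: "k * s + n * m = n * s" by (simp only: of_nat_eq_iff)
  define a where "a = (\<lambda>l. card (L -` {l}))"
  define U where "U = {1..s}"
  have finU: "finite U" and cardU: "card U = s" unfolding U_def by auto
  have "L -` U = UNIV" using assms(7) unfolding U_def by auto
  then have sumU: "sum a U = n" using card_vimage_sum[OF finU, of L] unfolding a_def n_def by simp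
  have bnd: "sum a A \<le> n - k" if A: "A \<subseteq> U" "card A = m" for A
  proof -
    have finA: "finite A" using A(1) finU finite_subset by blast
    have "vec.dim C + card (L -` A) \<le> CARD('n)"
    proof (rule dim_bound[OF assms(4)])
      fix x assume xC: "x \<in> C" and sx: "\<forall>j. j \<notin> L -` A \<longrightarrow> x $ j = 0"
      show "x = 0"
      proof (rule ccontr)
        assume "x \<noteq> 0"
        then have "labelweight_code L C \<le> enat (labelweight_vec L x)"
          unfolding labelweight_code_def using xC by (auto intro: INF_lower)
        moreover have "labelweight_vec L x \<le> m"
        proof -
          have "{L i | i. x $ i \<noteq> 0} \<subseteq> A" using sx by auto
          then have "card {L i | i. x $ i \<noteq> 0} \<le> card A" using finA by (rule card_mono[rotated])
          then show ?thesis using A(2) unfolding labelweight_vec_def by simp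
        qed
        ultimately have "enat (d * t + 1) \<le> enat m" using assms(8) by (meson enat_ord_simps(1) order_trans)
        then show False unfolding m_def by simp
      qed
    qed
    then have "k + sum a A \<le> n" using card_vimage_sum[OF finA, of L] unfolding k_def n_def a_def by simp
    then show ?thesis by simp
  qed
  have tot: "sum a U * m = (n - k) * card U"
    using ks sumU cardU by (simp add: diff_mult_distrib)
  have ms': "m < card U" using ms cardU by simp
  have "a l = a u" if "l \<in> U" "u \<in> U" for l u
    by (rule comb_part[OF finU m0 ms' bnd tot that])
  then show ?thesis unfolding a_def U_def by blast
qed

end
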